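(* Let $T$ be a regular $n$-tournament with adjacency matrix $A$. Then for every $i\in[n]$, \[ P_A(z)=\tfrac12\left(z-\tfrac{n-1}{2}\right)\Big[(n+2z+1)\,P_{A_i}(z)+(n-2z-1)\,P_{A_i}(-z-1)\Big]. \]
   Context: An $n$-tournament is a digraph on $n$ vertices in which every pair of distinct vertices is joined by exactly one arc; its adjacency matrix $A=(a_{ij})$ has $a_{ij}=1$ if $v_i$ dominates $v_j$ and $0$ otherwise. A tournament is regular if all vertices have the same out-degree. $P_M(z)=\det(zI-M)$. $[n]=\{1,\dots,n\}$, and $A_i$ denotes the principal submatrix of $A$ obtained by deleting row and column $i$. *)

theory Defs
  imports "Jordan_Normal_Form.Char_Poly"
begin

definition tournament_matrix :: "nat \<Rightarrow> complex mat \<Rightarrow> bool" where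
  "tournament_matrix n A \<longleftrightarrow> A \<in> carrier_mat n n \<and>
     (\<forall>i<n. \<forall>j<n. A $$ (i,j) = 0 \<or> A $$ (i,j) = 1) \<and>
     (\<forall>i<n. A $$ (i,i) = 0) \<and>
     (\<forall>i<n. \<forall>j<n. i \<noteq> j \<longrightarrow> A $$ (i,j) + A $$ (j,i) = 1)"

definition regular_tournament_matrix :: "nat \<Rightarrow> complex mat \<Rightarrow> bool" where
  "regular_tournament_matrix n A \<longleftrightarrow> tournament_matrix n A \<and>
     (\<exists>k. \<forall>i<n. (\<Sum>j<n. A $$ (i,j)) = k)"

end

theory Submission
  imports Defs
begin

definition repl_row :: "'a mat \<Rightarrow> nat \<Rightarrow> (nat \<Rightarrow> 'a) \<Rightarrow> 'a mat" where
  "repl_row X k v = mat (dim_row X) (dim_col X) (\<lambda>(l,j). if l = k then v j else X $$ (l,j))"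

definition repl_col :: "'a mat \<Rightarrow> nat \<Rightarrow> (nat \<Rightarrow> 'a) \<Rightarrow> 'a mat" where
  "repl_col X k v = mat (dim_row X) (dim_col X) (\<lambda>(l,j). if j = k then v l else X $$ (l,j))"

lemma repl_row_carrier[simp]: "X \<in> carrier_mat n n \<Longrightarrow> repl_row X k v \<in> carrier_mat n n"
  unfolding repl_row_def by auto
lemma repl_col_carrier[simp]: "X \<in> carrier_mat n n \<Longrightarrow> repl_col X k v \<in> carrier_mat n n"
  unfolding repl_col_def by auto

lemma mat_delete_repl_row:
  assumes "k < dim_row X"
  shows "mat_delete (repl_row X k v) k j = mat_delete X k j"
  unfolding mat_delete_def repl_row_def
  by (rule eq_matI, insert assms, auto)

lemma mat_delete_repl_col:
  assumes "k < dim_col X"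
  shows "mat_delete (repl_col X k v) j k = mat_delete X j k"
  unfolding mat_delete_def repl_col_def
  by (rule eq_matI, insert assms, auto)

lemma det_repl_row:
  fixes X :: "'a :: comm_ring_1 mat"
  assumes X: "X \<in> carrier_mat n n" and k: "k < n"
  shows "det (repl_row X k v) = (\<Sum>j<n. v j * cofactor X k j)"
proof -
  have "det (repl_row X k v) = (\<Sum>j<n. repl_row X k v $$ (k,j) * cofactor (repl_row X k v) k j)"
    by (rule laplace_expansion_row, insert X k, auto)
  also have "\<dots> = (\<Sum>j<n. v j * cofactor X k j)"
    by (rule sum.cong, insert X k, auto simp: cofactor_def mat_delete_repl_row, auto simp: repl_row_def)
  finally show ?thesis .
qed

lemma det_repl_col:
  fixes X :: "'a :: comm_ring_1 mat"
  assumes X: "X \<in> carrier_mat n n" and k: "k < n"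
  shows "det (repl_col X k v) = (\<Sum>l<n. v l * cofactor X l k)"
proof -
  have "det (repl_col X k v) = (\<Sum>l<n. repl_col X k v $$ (l,k) * cofactor (repl_col X k v) l k)"
    by (rule laplace_expansion_column, insert X k, auto)
  also have "\<dots> = (\<Sum>l<n. v l * cofactor X l k)"
    by (rule sum.cong, insert X k, auto simp: cofactor_def mat_delete_repl_col, auto simp: repl_col_def)
  finally show ?thesis .
qed

lemma cof_row_zero:
  fixes X :: "'a :: comm_ring_1 mat"
  assumes X: "X \<in> carrier_mat n n" and k: "k < n" and l: "l < n" and lk: "l \<noteq> k"
  shows "(\<Sum>j<n. X $$ (l,j) * cofactor X k j) = 0"
proof -
  have "(\<Sum>j<n. X $$ (l,j) * cofactor X k j) = det (repl_row X k (\<lambda>j. X $$ (l,j)))"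
    using det_repl_row[OF X k] by simp
  also have "\<dots> = 0"
    by (rule det_identical_rows[of _ n k l], insert X k l lk, auto simp: repl_row_def)
  finally show ?thesis .
qed

lemma cof_col_zero:
  fixes X :: "'a :: comm_ring_1 mat"
  assumes X: "X \<in> carrier_mat n n" and k: "k < n" and l: "l < n" and lk: "l \<noteq> k"
  shows "(\<Sum>j<n. X $$ (j,l) * cofactor X j k) = 0"
proof -
  have "(\<Sum>j<n. X $$ (j,l) * cofactor X j k) = det (repl_col X k (\<lambda>j. X $$ (j,l)))"
    using det_repl_col[OF X k] by simp
  also have "\<dots> = 0"
    by (rule det_identical_columns[of _ n k l], insert X k l lk, auto simp: repl_col_def)
  finally show ?thesis .
qed

lemma det_colsum:
  fixes X :: "'a :: comm_ring_1 mat"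
  assumes X: "X \<in> carrier_mat n n" and k: "k < n"
  shows "det X = (\<Sum>j<n. (\<Sum>l<n. X $$ (l,j)) * cofactor X k j)"
proof -
  have "(\<Sum>j<n. (\<Sum>l<n. X $$ (l,j)) * cofactor X k j) = (\<Sum>j<n. \<Sum>l<n. X $$ (l,j) * cofactor X k j)"
    by (simp add: sum_distrib_right)
  also have "\<dots> = (\<Sum>l<n. \<Sum>j<n. X $$ (l,j) * cofactor X k j)" by (rule sum.swap)
  also have "\<dots> = (\<Sum>l<n. if l = k then det X else 0)"
    by (rule sum.cong, insert X k, auto simp: cof_row_zero laplace_expansion_row[symmetric])
  also have "\<dots> = det X" using k by simp
  finally show ?thesis by simp
qed

lemma det_rowsum:
  fixes X :: "'a :: comm_ring_1 mat"
  assumes X: "X \<in> carrier_mat n n" and k: "k < n"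
  shows "det X = (\<Sum>l<n. (\<Sum>j<n. X $$ (l,j)) * cofactor X l k)"
proof -
  have "(\<Sum>l<n. (\<Sum>j<n. X $$ (l,j)) * cofactor X l k) = (\<Sum>l<n. \<Sum>j<n. X $$ (l,j) * cofactor X l k)"
    by (simp add: sum_distrib_right)
  also have "\<dots> = (\<Sum>j<n. \<Sum>l<n. X $$ (l,j) * cofactor X l k)" by (rule sum.swap)
  also have "\<dots> = (\<Sum>j<n. if j = k then det X else 0)"
    by (rule sum.cong, insert X k, auto simp: cof_col_zero laplace_expansion_column[symmetric])
  also have "\<dots> = det X" using k by simp
  finally show ?thesis by simp
qed


lemma neg1_even_pow: "(-1::'a::comm_ring_1)^(i+i) = 1"
  by (induct i) auto

lemma sum_L:
  fixes g :: "nat \<Rightarrow> 'a::comm_ring_1"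
  assumes "l < n" "i < n"
  shows "(\<Sum>p = 0..<n. ((if p = l then 1 else 0) - (if p = i \<and> l \<noteq> i then 1 else 0)) * g p)
     = g l - (if l \<noteq> i then g i else 0)"
proof -
  have "(\<Sum>p = 0..<n. ((if p = l then 1 else 0) - (if p = i \<and> l \<noteq> i then 1 else 0)) * g p)
    = (\<Sum>p = 0..<n. (if p = l then g p else 0) - (if l \<noteq> i then (if p = i then g p else 0) else 0))"
    by (rule sum.cong, auto)
  also have "\<dots> = g l - (if l \<noteq> i then g i else 0)"
    using assms by (simp add: sum_subtractf)
  finally show ?thesis .
qed

theorem lemma4p2:
  fixes n :: nat and A :: "complex mat" and i :: nat and z :: complex
  assumes "regular_tournament_matrix n A" and "i < n"
  shows "poly (char_poly A) z =
    (1/2) * (z - (of_nat n - 1) / 2) *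
      ((of_nat n + 2 * z + 1) * poly (char_poly (mat_delete A i i)) z
       + (of_nat n - 2 * z - 1) * poly (char_poly (mat_delete A i i)) (- z - 1))"
proof -
  note i = assms(2)
  from assms(1) obtain k where rs: "\<And>l. l < n \<Longrightarrow> (\<Sum>j<n. A $$ (l,j)) = k"
    and Ac: "A \<in> carrier_mat n n"
    and A01: "\<And>l j. l < n \<Longrightarrow> j < n \<Longrightarrow> A $$ (l,j) = 0 \<or> A $$ (l,j) = 1"
    and Ad: "\<And>l. l < n \<Longrightarrow> A $$ (l,l) = 0"
    and Ap: "\<And>l j. l < n \<Longrightarrow> j < n \<Longrightarrow> l \<noteq> j \<Longrightarrow> A $$ (l,j) + A $$ (j,l) = 1"
  proof -
    from assms(1) have T: "tournament_matrix n A" and "\<exists>k. \<forall>l<n. (\<Sum>j<n. A $$ (l,j)) = k"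
      unfolding regular_tournament_matrix_def by auto
    then obtain k where "\<forall>l<n. (\<Sum>j<n. A $$ (l,j)) = k" by auto
    with T show ?thesis unfolding tournament_matrix_def using that by auto
  qed
  have Asym: "A $$ (l,j) = (if l = j then 0 else 1) - A $$ (j,l)" if "l < n" "j < n" for l j
    using Ad[of l] Ap[of l j] that by (cases "l = j") (auto simp: algebra_simps)
  have ones: "(\<Sum>j<n. (if l = j then 0 else 1::complex)) = of_nat n - 1" if "l < n" for l
  proof -
    have "(\<Sum>j<n. (if l = j then 0 else 1::complex)) = (\<Sum>j<n. 1 - (if j = l then 1 else 0))"
      by (rule sum.cong, auto)
    also have "\<dots> = of_nat n - 1" using that by (simp add: sum_subtractf)
    finally show ?thesis .
  qed
  define S where "S = (\<Sum>l<n. \<Sum>j<n. A $$ (l,j))"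
  have S1: "S = of_nat n * k" unfolding S_def using rs by simp
  have sw: "(\<Sum>l<n. \<Sum>j<n. A $$ (j,l)) = (\<Sum>l<n. \<Sum>j<n. A $$ (l,j))" by (rule sum.swap)
  have pair: "A $$ (l,j) + A $$ (j,l) = (if l = j then 0 else 1)" if "l < n" "j < n" for l j
    using Ad[of l] Ap[of l j] that by (cases "l = j") auto
  have "2 * S = (\<Sum>l<n. \<Sum>j<n. A $$ (l,j)) + (\<Sum>l<n. \<Sum>j<n. A $$ (j,l))"
    unfolding S_def sw by (simp only: mult_2)
  also have "\<dots> = (\<Sum>l<n. \<Sum>j<n. A $$ (l,j) + A $$ (j,l))" by (simp only: sum.distrib)
  also have "\<dots> = (\<Sum>l<n. \<Sum>j<n. (if l = j then 0 else 1))"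
    by (rule sum.cong[OF refl], rule sum.cong[OF refl], simp add: pair)
  also have "\<dots> = (\<Sum>l<n. of_nat n - 1)" by (rule sum.cong, auto simp: ones)
  finally have S2: "2 * S = of_nat n * (of_nat n - 1)" by simp
  have n0: "n > 0" using i by simp
  have "of_nat n * (2 * k) = of_nat n * (of_nat n - 1 :: complex)" using S1 S2 by (simp add: algebra_simps)
  hence "2 * k = of_nat n - 1" using n0 by (simp only: mult_left_cancel of_nat_eq_0_iff)
  hence kval: "k = (of_nat n - 1) / 2" by (simp add: field_simps)
  have "(\<Sum>j<n. A $$ (0,j)) = (\<Sum>j<n. of_nat (if A $$ (0,j) = 1 then 1 else 0))"
    by (rule sum.cong, insert A01[of 0] n0, force+)
  also have "\<dots> = of_nat (\<Sum>j<n. (if A $$ (0,j) = 1 then 1 else 0))" by (simp only: of_nat_sum)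
  finally obtain c :: nat where "k = of_nat c" using rs[OF n0] by metis
  with kval have "of_nat n = (of_nat (2*c+1) :: complex)" by (simp add: field_simps)
  hence nc: "n = 2*c+1" using of_nat_eq_iff by blast
  define m where "m = n - 1"
  have nm: "n = Suc m" and m2: "m = c + c" using nc unfolding m_def by auto
  have colsum: "(\<Sum>l<n. A $$ (l,j)) = k" if j: "j < n" for j
  proof -
    have "(\<Sum>l<n. A $$ (l,j)) = (\<Sum>l<n. (if j = l then 0 else 1) - A $$ (j,l))"
      by (rule sum.cong[OF refl], insert j, metis Asym lessThan_iff)
    also have "\<dots> = (of_nat n - 1) - k" using ones[OF j] rs[OF j] by (simp add: sum_subtractf)
    also have "of_nat n - 1 = 2 * k" unfolding kval by simp
    finally show ?thesis by simp
  qed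
  define s where "s = z - k"
  define N where "N = mat n n (\<lambda>(l,j). (if l = j then z else 0) - A $$ (l,j))"
  have Nc: "N \<in> carrier_mat n n" unfolding N_def by simp
  have Nrow: "(\<Sum>j<n. N $$ (l,j)) = s" if "l < n" for l
    using that rs[OF that] unfolding N_def s_def by (simp add: sum_subtractf)
  have Ncol: "(\<Sum>l<n. N $$ (l,j)) = s" if "j < n" for j
    using that colsum[OF that] unfolding N_def s_def by (simp add: sum_subtractf)
  have PA: "poly (char_poly A) z = det N" unfolding char_poly_def
    by (rule poly_det_cong[of _ n], insert Ac, auto simp: char_poly_matrix_def N_def)
  define B where "B = mat_delete A i i"
  have Bc: "B \<in> carrier_mat m m" unfolding B_def m_def using mat_delete_carrier[OF Ac] .
  have Bent: "B $$ (a,b) = A $$ (if a < i then a else Suc a, if b < i then b else Suc b)"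
    if "a < m" "b < m" for a b
    using that Ac unfolding B_def mat_delete_def m_def by auto
  define d where "d = det (mat_delete N i i)"
  have PB1: "poly (char_poly B) z = d" unfolding char_poly_def d_def
    by (rule poly_det_cong[of _ m], insert Ac Bc Bent i,
        auto simp: char_poly_matrix_def N_def mat_delete_def m_def)
  define X where "X = mat n n (\<lambda>(l,j). if l = i then 1 else if j = i then 0 else N $$ (l,j) + 1)"
  have Xc: "X \<in> carrier_mat n n" unfolding X_def by simp
  define Mm where "Mm = mat m m (\<lambda>(a,b). (if a = b then -z-1 else 0) - B $$ (a,b))"
  have PB2: "poly (char_poly B) (-z-1) = det Mm" unfolding char_poly_def
    by (rule poly_det_cong[of _ m], insert Bc, auto simp: char_poly_matrix_def Mm_def)
  have MmX: "Mm = (-1) \<cdot>\<^sub>m transpose_mat (mat_delete X i i)"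
  proof (rule eq_matI)
    fix a b assume ab: "a < dim_row ((-1) \<cdot>\<^sub>m transpose_mat (mat_delete X i i))"
      "b < dim_col ((-1) \<cdot>\<^sub>m transpose_mat (mat_delete X i i))"
    hence a: "a < m" and b: "b < m" unfolding m_def X_def by auto
    define fa where "fa = (if a < i then a else Suc a)"
    define fb where "fb = (if b < i then b else Suc b)"
    have fa: "fa < n" "fa \<noteq> i" and fb: "fb < n" "fb \<noteq> i" using a b nm unfolding fa_def fb_def by auto
    have fab: "(fa = fb) = (a = b)" unfolding fa_def fb_def by auto
    have "((-1) \<cdot>\<^sub>m transpose_mat (mat_delete X i i)) $$ (a,b) = - (N $$ (fb,fa) + 1)"
      using a b fa fb nm unfolding X_def mat_delete_def fa_def fb_def m_def by auto
    also have "\<dots> = (if a = b then -z-1 else 0) - A $$ (fa,fb)"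
      using fa fb fab Asym[of fb fa] unfolding N_def by (auto simp: algebra_simps)
    also have "\<dots> = Mm $$ (a,b)" using a b Bent[OF a b] unfolding Mm_def fa_def fb_def by simp
    finally show "Mm $$ (a,b) = ((-1) \<cdot>\<^sub>m transpose_mat (mat_delete X i i)) $$ (a,b)" by simp
  qed (auto simp: Mm_def X_def m_def)
  define e where "e = det (mat_delete X i i)"
  have detMm: "det Mm = e"
  proof -
    have XD: "mat_delete X i i \<in> carrier_mat m m" using mat_delete_carrier[OF Xc] unfolding m_def .
    have "det Mm = (-1)^m * det (transpose_mat (mat_delete X i i))"
      unfolding MmX by (subst det_smult, insert XD, simp add: X_def m_def)
    also have "\<dots> = e" unfolding e_def using det_transpose[OF XD] m2 neg1_even_pow[of c] by simp
    finally show ?thesis .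
  qed
  define Q where "Q = repl_row N i (\<lambda>_. 1)"
  have Qc: "Q \<in> carrier_mat n n" unfolding Q_def using Nc by simp
  define W where "W = repl_col Q i (\<lambda>_. 1)"
  define V where "V = repl_col Q i (\<lambda>l. if l = i then 1 else -1)"
  have cQii: "cofactor Q i i = d"
    unfolding cofactor_def d_def Q_def using Nc i
    by (simp add: mat_delete_repl_row neg1_even_pow)
  have D1: "det N = s * det Q"
  proof -
    have "det N = (\<Sum>j<n. (\<Sum>l<n. N $$ (l,j)) * cofactor N i j)" by (rule det_colsum[OF Nc i])
    also have "\<dots> = (\<Sum>j<n. s * (1 * cofactor N i j))" by (rule sum.cong, auto simp: Ncol)
    also have "\<dots> = s * det Q" unfolding Q_def det_repl_row[OF Nc i] by (simp add: sum_distrib_left)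
    finally show ?thesis .
  qed
  have D2: "det Q = s * det W + (of_nat n - s) * d"
  proof -
    have Qrow: "(\<Sum>j<n. Q $$ (l,j)) = s + (if l = i then of_nat n - s else 0)" if "l < n" for l
      using that Nrow[OF that] Nc unfolding Q_def repl_row_def by auto
    have "det Q = (\<Sum>l<n. (\<Sum>j<n. Q $$ (l,j)) * cofactor Q l i)" by (rule det_rowsum[OF Qc i])
    also have "\<dots> = (\<Sum>l<n. s * (1 * cofactor Q l i) + (if l = i then (of_nat n - s) * cofactor Q l i else 0))"
      by (rule sum.cong, auto simp: Qrow algebra_simps)
    also have "\<dots> = s * det W + (of_nat n - s) * d"
      unfolding W_def det_repl_col[OF Qc i] using i cQii by (simp add: sum.distrib sum_distrib_left)
    finally show ?thesis .
  qed
  have D3: "det V = - det W + 2 * d"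
  proof -
    have "det V = (\<Sum>l<n. (if l = i then 1 else -1) * cofactor Q l i)"
      unfolding V_def det_repl_col[OF Qc i] ..
    also have "\<dots> = (\<Sum>l<n. - (1 * cofactor Q l i) + (if l = i then 2 * cofactor Q l i else 0))"
      by (rule sum.cong, auto)
    also have "\<dots> = - det W + 2 * d"
      unfolding W_def det_repl_col[OF Qc i] using i cQii by (simp add: sum_subtractf)
    finally show ?thesis .
  qed
  define L where "L = mat n n (\<lambda>(l,p). (if p = l then 1 else 0) - (if p = i \<and> l \<noteq> i then 1 else (0::complex)))"
  have Lc: "L \<in> carrier_mat n n" unfolding L_def by simp
  have VLX: "V = L * X"
  proof (rule eq_matI)
    fix l j assume "l < dim_row (L * X)" "j < dim_col (L * X)"
    hence l: "l < n" and j: "j < n" unfolding L_def X_def by auto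
    have "(L * X) $$ (l,j) = (\<Sum>p = 0..<n. ((if p = l then 1 else 0) - (if p = i \<and> l \<noteq> i then 1 else 0)) * X $$ (p,j))"
      using l j unfolding L_def X_def by (simp add: scalar_prod_def)
    also have "\<dots> = X $$ (l,j) - (if l \<noteq> i then X $$ (i,j) else 0)" by (rule sum_L[OF l i])
    also have "\<dots> = V $$ (l,j)" using l j i Nc unfolding X_def V_def Q_def repl_col_def repl_row_def by auto
    finally show "V $$ (l,j) = (L * X) $$ (l,j)" by simp
  qed (auto simp: V_def Q_def repl_col_def repl_row_def L_def X_def N_def)
  have detL: "det L = 1"
  proof -
    have "det L = (\<Sum>j<n. L $$ (i,j) * cofactor L i j)" by (rule laplace_expansion_row[OF Lc i])
    also have "\<dots> = (\<Sum>j<n. if j = i then cofactor L i j else 0)"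
      by (rule sum.cong, insert i, auto simp: L_def)
    also have "\<dots> = cofactor L i i" using i by simp
    also have "mat_delete L i i = 1\<^sub>m m"
      by (rule eq_matI, auto simp: L_def mat_delete_def m_def)
    hence "cofactor L i i = 1" unfolding cofactor_def by (simp add: neg1_even_pow)
    finally show ?thesis .
  qed
  have detX: "det X = e"
  proof -
    have "det X = (\<Sum>l<n. X $$ (l,i) * cofactor X l i)" by (rule laplace_expansion_column[OF Xc i])
    also have "\<dots> = (\<Sum>l<n. if l = i then cofactor X l i else 0)"
      by (rule sum.cong, insert i, auto simp: X_def)
    also have "\<dots> = cofactor X i i" using i by simp
    also have "\<dots> = e" unfolding cofactor_def e_def by (simp add: neg1_even_pow)
    finally show ?thesis .
  qed
  have "det V = e" unfolding VLX det_mult[OF Lc Xc] detL detX by simp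
  hence wval: "det W = 2 * d - e" using D3 by (simp add: algebra_simps)
  have main: "det N = s * (s * (2 * d - e) + (of_nat n - s) * d)" using D1 D2 wval by simp
  show ?thesis unfolding PA B_def[symmetric] PB1 PB2 detMm main s_def kval
    by (simp add: field_simps)
qed

end
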